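(* Let $\mathcal A$ be a finite uniform non-associative algebra and $\Rsh$ a projection operator from $\mathcal A$ to another non-associative algebra. If $\Rsh$ is superdistributive over $\diamond$ on the set of atoms of $\mathcal A$, then $\Rsh$ is superdistributive over $\diamond$ on $\mathcal A$.
   Context: A finite non-associative algebra is a tuple $(\mathcal A,\cup,\neg,\emptyset,\mathcal B,\diamond,\overline{\cdot},e)$ where $(\mathcal A,\cup,\neg,\emptyset,\mathcal B)$ is a finite Boolean algebra and for all $x,y,z$: $\overline{\overline x}=x$, $\overline{x\cup y}=\overline x\cup\overline y$, $\overline{x\diamond y}=\overline y\diamond\overline x$, $e\diamond x=x\diamond e=x$, $x\diamond(y\cup z)=(x\diamond y)\cup(x\diamond z)$, $(x\diamond y)\cap\overline z=\emptyset\iff(y\diamond z)\cap\overline x=\emptyset$. $r\subseteq r'$ means $r\cup r'=r'$; atoms are the basic relations. The algebra is uniform if $b\diamond b'\neq\emptyset$ for all atoms $b,b'$. A projection operator from $\mathcal A$ to $\mathcal A'$ is a map $\Rsh$ with $\Rsh(r\cup r')=\Rsh r\cup\Rsh r'$ and $\Rsh\overline r=\overline{\Rsh r}$. $\Rsh$ is superdistributive over $\diamond$ on a subset $X\subseteq\mathcal A$ if for all $r,r'\in X$ with $r\diamond r'\neq\emptyset$, $(\Rsh r)\diamond(\Rsh r')\subseteq\Rsh(r\diamond r')$. *)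

theory Defs
  imports Main
begin

text \<open>A finite non-associative algebra: the Boolean algebra part is the (finite)
  type itself with sup (union), uminus (complement), bot (empty), top;
  cmp is the composition, conv is the converse, e the identity.\<close>

definition nonassoc_alg ::
  "('a::{boolean_algebra,finite} \<Rightarrow> 'a \<Rightarrow> 'a) \<Rightarrow> ('a \<Rightarrow> 'a) \<Rightarrow> 'a \<Rightarrow> bool" where
  "nonassoc_alg cmp conv e \<longleftrightarrow>
     (\<forall>x. conv (conv x) = x) \<and>
     (\<forall>x y. conv (sup x y) = sup (conv x) (conv y)) \<and>
     (\<forall>x y. conv (cmp x y) = cmp (conv y) (conv x)) \<and>
     (\<forall>x. cmp e x = x \<and> cmp x e = x) \<and>
     (\<forall>x y z. cmp x (sup y z) = sup (cmp x y) (cmp x z)) \<and>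
     (\<forall>x y z. inf (cmp x y) (conv z) = bot \<longleftrightarrow> inf (cmp y z) (conv x) = bot)"

definition is_atom :: "'a::boolean_algebra \<Rightarrow> bool" where
  "is_atom b \<longleftrightarrow> b \<noteq> bot \<and> (\<forall>x. x \<le> b \<longrightarrow> x = bot \<or> x = b)"

definition uniform_alg :: "('a::boolean_algebra \<Rightarrow> 'a \<Rightarrow> 'a) \<Rightarrow> bool" where
  "uniform_alg cmp \<longleftrightarrow> (\<forall>b b'. is_atom b \<longrightarrow> is_atom b' \<longrightarrow> cmp b b' \<noteq> bot)"

definition projection_op ::
  "('a::boolean_algebra \<Rightarrow> 'a) \<Rightarrow> ('b::boolean_algebra \<Rightarrow> 'b) \<Rightarrow> ('a \<Rightarrow> 'b) \<Rightarrow> bool" where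
  "projection_op conv conv' P \<longleftrightarrow>
     (\<forall>r r'. P (sup r r') = sup (P r) (P r')) \<and> (\<forall>r. P (conv r) = conv' (P r))"

definition superdistributive_on ::
  "('a::boolean_algebra \<Rightarrow> 'a \<Rightarrow> 'a) \<Rightarrow> ('b::boolean_algebra \<Rightarrow> 'b \<Rightarrow> 'b) \<Rightarrow> ('a \<Rightarrow> 'b) \<Rightarrow> 'a set \<Rightarrow> bool" where
  "superdistributive_on cmp cmp' P X \<longleftrightarrow>
     (\<forall>r\<in>X. \<forall>r'\<in>X. cmp r r' \<noteq> bot \<longrightarrow> cmp' (P r) (P r') \<le> P (cmp r r'))"

end

theory Submission
  imports Defs
begin

lemma atom_induct:
  fixes Q :: "'a::{boolean_algebra,finite} \<Rightarrow> bool"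
  assumes bot: "Q bot" and at: "\<And>x. is_atom x \<Longrightarrow> Q x"
    and su: "\<And>x y. Q x \<Longrightarrow> Q y \<Longrightarrow> Q (sup x y)"
  shows "Q x"
proof (induction "card {y. y < x}" arbitrary: x rule: less_induct)
  case less
  show ?case
  proof (cases "x = bot \<or> is_atom x")
    case True then show ?thesis using bot at by auto
  next
    case False
    then obtain y where y: "y \<le> x" "y \<noteq> bot" "y \<noteq> x" unfolding is_atom_def by auto
    have c: "card {z. z < w} < card {z. z < x}" if "w < x" for w
    proof (rule psubset_card_mono)
      show "finite {z. z < x}" by simp
      show "{z. z < w} \<subset> {z. z < x}" using that by auto
    qed
    have "y < x" using y by auto
    moreover have "inf x (- y) < x"
    proof -
      have "inf x (- y) \<le> x" by simp
      moreover have "inf x (- y) \<noteq> x"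
      proof
        assume "inf x (- y) = x"
        then have "x \<le> - y" by (metis inf.absorb_iff1 inf_commute)
        with y(1) have "y \<le> - y" by order
        then have "y = bot" by (metis inf.absorb1 inf_compl_bot)
        with y show False by simp
      qed
      ultimately show ?thesis by (simp add: less_le)
    qed
    moreover have "x = sup y (inf x (- y))"
      using y(1) by (metis inf.absorb2 inf_sup_distrib1 sup_compl_top inf_top_right inf_commute sup_commute sup_inf_distrib1)
    ultimately show ?thesis using less c su by metis
  qed
qed

lemma alg_facts:
  fixes cmp :: "'a::{boolean_algebra,finite} \<Rightarrow> 'a \<Rightarrow> 'a"
  assumes A: "nonassoc_alg cmp conv e"
  shows "cmp (sup y z) x = sup (cmp y x) (cmp z x)"
    and "cmp x (sup y z) = sup (cmp x y) (cmp x z)"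
    and "cmp bot x = bot" and "cmp x bot = bot"
proof -
  have cc: "\<And>x. conv (conv x) = x" and cs: "\<And>x y. conv (sup x y) = sup (conv x) (conv y)"
    and cm: "\<And>x y. conv (cmp x y) = cmp (conv y) (conv x)"
    and ds: "\<And>x y z. cmp x (sup y z) = sup (cmp x y) (cmp x z)"
    and pe: "\<And>x y z. inf (cmp x y) (conv z) = bot \<longleftrightarrow> inf (cmp y z) (conv x) = bot"
    using A unfolding nonassoc_alg_def by meson+
  show "cmp x (sup y z) = sup (cmp x y) (cmp x z)" by (rule ds)
  show "cmp (sup y z) x = sup (cmp y x) (cmp z x)"
    by (metis cc cs cm ds)
  have mono: "a \<le> b \<Longrightarrow> conv a \<le> conv b" for a b by (metis cs le_iff_sup)
  have cb: "conv bot = bot" using mono[of bot "conv bot"] cc by (metis bot.extremum bot.extremum_uniqueI)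
  have ct: "conv top = top" using mono[of "conv top" top] cc by (metis top.extremum top.extremum_uniqueI)
  have cbx: "cmp bot y = bot" for y
    using pe[of bot y "conv top"] cc cb by simp
  show "cmp bot x = bot" by (rule cbx)
  show "cmp x bot = bot" by (metis cbx cb cm cc)
qed

theorem proposition6p12:
  fixes cmp :: "'a::{boolean_algebra,finite} \<Rightarrow> 'a \<Rightarrow> 'a" and conv :: "'a \<Rightarrow> 'a" and e :: 'a
    and cmp' :: "'b::{boolean_algebra,finite} \<Rightarrow> 'b \<Rightarrow> 'b" and conv' :: "'b \<Rightarrow> 'b" and e' :: 'b
    and P :: "'a \<Rightarrow> 'b"
  assumes "nonassoc_alg cmp conv e"
    and "uniform_alg cmp"
    and "nonassoc_alg cmp' conv' e'"
    and "projection_op conv conv' P"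
    and "superdistributive_on cmp cmp' P {b. is_atom b}"
  shows "superdistributive_on cmp cmp' P UNIV"
proof -
  note F = alg_facts[OF assms(1)] and F' = alg_facts[OF assms(3)]
  have Ps: "\<And>r s. P (sup r s) = sup (P r) (P s)" using assms(4) unfolding projection_op_def by auto
  have Pm: "r \<le> s \<Longrightarrow> P r \<le> P s" for r s by (metis Ps le_iff_sup)
  have AT: "is_atom b \<Longrightarrow> is_atom b' \<Longrightarrow> cmp' (P b) (P b') \<le> P (cmp b b')" for b b'
    using assms(2,5) unfolding uniform_alg_def superdistributive_on_def by auto
  have S1: "is_atom b' \<Longrightarrow> r \<noteq> bot \<Longrightarrow> cmp' (P r) (P b') \<le> P (cmp r b')" for r b'
  proof (induction r rule: atom_induct)
    case (3 x y)
    show ?case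
    proof (cases "x = bot")
      case True then show ?thesis using 3 by simp
    next
      case xb: False
      show ?thesis
      proof (cases "y = bot")
        case True then show ?thesis using 3 by simp
      next
        case False
        have "cmp' (P (sup x y)) (P b') = sup (cmp' (P x) (P b')) (cmp' (P y) (P b'))"
          by (simp add: Ps F'(1))
        also have "\<dots> \<le> sup (P (cmp x b')) (P (cmp y b'))" using 3 xb False by (meson sup_mono)
        also have "\<dots> = P (cmp (sup x y) b')" by (simp add: Ps F(1))
        finally show ?thesis .
      qed
    qed
  qed (auto intro: AT)
  have S2: "\<forall>r. r \<noteq> bot \<longrightarrow> r' \<noteq> bot \<longrightarrow> cmp' (P r) (P r') \<le> P (cmp r r')" for r'
  proof (induction r' rule: atom_induct)
    case (3 x y)
    show ?case
    proof (intro allI impI)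
      fix r :: 'a assume r: "r \<noteq> bot" "sup x y \<noteq> bot"
      show "cmp' (P r) (P (sup x y)) \<le> P (cmp r (sup x y))"
      proof (cases "x = bot")
        case True then show ?thesis using 3 r by simp
      next
        case xb: False
        show ?thesis
        proof (cases "y = bot")
          case True then show ?thesis using 3 r by simp
        next
          case False
          have "cmp' (P r) (P (sup x y)) = sup (cmp' (P r) (P x)) (cmp' (P r) (P y))"
            by (simp add: Ps F'(2))
          also have "\<dots> \<le> sup (P (cmp r x)) (P (cmp r y))" using 3 r xb False by (meson sup_mono)
          also have "\<dots> = P (cmp r (sup x y))" by (simp add: Ps F(2))
          finally show ?thesis .
        qed
      qed
    qed
  qed (auto intro: S1)
  show ?thesis unfolding superdistributive_on_def
    using S2 F(3,4) by metis
qed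

end
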